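(* Let $T_0$ be an unrooted binary phylogenetic tree on $n$ leaves. There is an NNI-walk of length $O(n^2)$ that visits every tree of the SPR neighborhood $N_{SPR}(T_0)$. *)

theory Defs
  imports Main
begin

text \<open>Leaves of a phylogenetic X-tree are
  identified with the labels in X (X is the leaf set; labels = leaf vertices).\<close>

type_synonym graph = "nat set \<times> nat set set"

definition adj :: "nat set set \<Rightarrow> (nat \<times> nat) set" where
  "adj E = {(a, b). {a, b} \<in> E}"

definition degree :: "nat set set \<Rightarrow> nat \<Rightarrow> nat" where
  "degree E v = card {w. {v, w} \<in> E}"

definition is_tree :: "graph \<Rightarrow> bool" where
  "is_tree T \<longleftrightarrow> (case T of (V, E) \<Rightarrow>
     finite V \<and>
     (\<forall>e\<in>E. \<exists>a b. a \<noteq> b \<and> a \<in> V \<and> b \<in> V \<and> e = {a, b}) \<and>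
     (\<forall>a\<in>V. \<forall>b\<in>V. (a, b) \<in> (adj E)\<^sup>*) \<and>
     (\<forall>e\<in>E. \<forall>a b. e = {a, b} \<longrightarrow> (a, b) \<notin> (adj (E - {e}))\<^sup>*))"

definition phylo_tree :: "nat set \<Rightarrow> graph \<Rightarrow> bool" where
  "phylo_tree X T \<longleftrightarrow> (case T of (V, E) \<Rightarrow>
     is_tree (V, E) \<and> X \<subseteq> V \<and>
     (\<forall>v\<in>V. v \<in> X \<longleftrightarrow> degree E v = 1) \<and>
     (\<forall>v\<in>V - X. degree E v = 3))"

definition tree_iso :: "nat set \<Rightarrow> graph \<Rightarrow> graph \<Rightarrow> bool" where
  "tree_iso X T T' \<longleftrightarrow> (case T of (V, E) \<Rightarrow> case T' of (V', E') \<Rightarrow>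
     (\<exists>f. bij_betw f V V' \<and> (\<forall>x\<in>X. f x = x) \<and>
          (\<forall>a\<in>V. \<forall>b\<in>V. {a, b} \<in> E \<longleftrightarrow> {f a, f b} \<in> E')))"

text \<open>Concrete NNI move across the internal edge {u,v}: u has neighbours v, a (and b),
  v has neighbours u, c (and d); the subtrees at a and c are swapped.\<close>
definition nni_move :: "nat set \<Rightarrow> graph \<Rightarrow> graph \<Rightarrow> bool" where
  "nni_move X T T' \<longleftrightarrow> (case T of (V, E) \<Rightarrow> case T' of (V', E') \<Rightarrow>
     (\<exists>u v a c. {u, v} \<in> E \<and> u \<notin> X \<and> v \<notin> X \<and>
        {u, a} \<in> E \<and> a \<noteq> v \<and> {v, c} \<in> E \<and> c \<noteq> u \<and>
        V' = V \<and> E' = (E - {{u, a}, {v, c}}) \<union> {{v, a}, {u, c}}))"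

definition nni :: "nat set \<Rightarrow> graph \<Rightarrow> graph \<Rightarrow> bool" where
  "nni X T T' \<longleftrightarrow> phylo_tree X T \<and> phylo_tree X T' \<and>
     (\<exists>T''. nni_move X T T'' \<and> tree_iso X T'' T')"

text \<open>Concrete SPR move: cut the edge {u,v} (u internal), pruning the subtree S
  containing v; suppress the now degree-2 vertex u (whose other neighbours are p, q)
  by replacing the path p-u-q with the edge {p,q}; then regraft by subdividing an edge
  {x,y} of the remaining tree with u and re-adding the edge {u,v}.\<close>
definition spr_move :: "nat set \<Rightarrow> graph \<Rightarrow> graph \<Rightarrow> bool" where
  "spr_move X T T' \<longleftrightarrow> (case T of (V, E) \<Rightarrow> case T' of (V', E') \<Rightarrow>
     (\<exists>u v p q x y. {u, v} \<in> E \<and> u \<notin> X \<and>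
        {u, p} \<in> E \<and> {u, q} \<in> E \<and> p \<noteq> q \<and> p \<noteq> v \<and> q \<noteq> v \<and>
        (let S = {w. (v, w) \<in> (adj (E - {{u, v}}))\<^sup>*};
             ER = ({e \<in> E. e \<inter> S = {}} - {{u, p}, {u, q}}) \<union> {{p, q}}
         in {x, y} \<in> ER \<and> V' = V \<and>
            E' = {e \<in> E. e \<subseteq> S} \<union> (ER - {{x, y}}) \<union> {{x, u}, {u, y}, {u, v}})))"

definition spr :: "nat set \<Rightarrow> graph \<Rightarrow> graph \<Rightarrow> bool" where
  "spr X T T' \<longleftrightarrow> phylo_tree X T \<and> phylo_tree X T' \<and>
     (\<exists>T''. spr_move X T T'' \<and> tree_iso X T'' T')"

text \<open>An NNI-walk: a nonempty list of phylogenetic X-trees, consecutive ones related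
  by an NNI move. Its length is the number of moves, length ws - 1.\<close>
definition nni_walk :: "nat set \<Rightarrow> graph list \<Rightarrow> bool" where
  "nni_walk X ws \<longleftrightarrow> ws \<noteq> [] \<and> (\<forall>T\<in>set ws. phylo_tree X T) \<and>
     (\<forall>i. Suc i < length ws \<longrightarrow> nni X (ws ! i) (ws ! Suc i))"

end

theory Submission
  imports Defs
begin
lemma adj_iff[simp]: "(a,b) \<in> adj E \<longleftrightarrow> {a,b} \<in> E"
  by (simp add: adj_def)

lemma adj_sym: "(a,b) \<in> (adj E)\<^sup>* \<Longrightarrow> (b,a) \<in> (adj E)\<^sup>*"
proof (induction rule: rtrancl_induct)
  case base then show ?case by simp
next
  case (step y z)
  have "(z,y) \<in> adj E" using step(2) by (simp add: insert_commute)
  then show ?case using step(3) by (rule converse_rtrancl_into_rtrancl)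
qed

lemma adj_mono: "E \<subseteq> F \<Longrightarrow> (a,b) \<in> (adj E)\<^sup>* \<Longrightarrow> (a,b) \<in> (adj F)\<^sup>*"
  by (erule rtrancl_mono[THEN subsetD, rotated]) (auto simp: adj_def)

lemma adj_edge: "{a,b} \<in> E \<Longrightarrow> (a,b) \<in> (adj E)\<^sup>*"
  by (simp add: r_into_rtrancl)

lemma cut_lemma: "(x,y) \<in> (adj E)\<^sup>* \<Longrightarrow> x \<in> A \<Longrightarrow> y \<notin> A \<Longrightarrow> \<exists>a b. {a,b} \<in> E \<and> a \<in> A \<and> b \<notin> A"
proof (induction rule: rtrancl_induct)
  case base then show ?case by simp
next
  case (step y z)
  then show ?case by (cases "y \<in> A") auto
qed

lemma succ_remdups:
  "successively (\<lambda>A B. A = B \<or> R A B) xs \<Longrightarrow> successively R (remdups_adj xs)"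
proof (induction xs rule: remdups_adj.induct)
  case 1 then show ?case by simp
next
  case (2 x) then show ?case by simp
next
  case (3 x y xs)
  show ?case
  proof (cases "x = y")
    case True
    then show ?thesis using 3 by auto
  next
    case False
    have "successively R (remdups_adj (y # xs))" using 3 False by auto
    moreover have "R x y" using 3(3) False by simp
    ultimately show ?thesis using False
      by (simp add: successively_Cons) 
  qed
qed

definition reach :: "nat set set \<Rightarrow> nat \<Rightarrow> nat set" where
  "reach F x = {w. (x,w) \<in> (adj F)\<^sup>*}"

lemma reach_closed: "{s,t} \<in> F \<Longrightarrow> s \<in> reach F x \<longleftrightarrow> t \<in> reach F x"
proof -
  assume st: "{s,t} \<in> F"
  have "(s,t) \<in> adj F" "(t,s) \<in> adj F" using st by (auto simp: insert_commute)
  then show ?thesis unfolding reach_def by (auto intro: rtrancl_into_rtrancl)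
qed

lemma reach_step: "s \<in> reach F x \<Longrightarrow> {s,t} \<in> F \<Longrightarrow> t \<in> reach F x"
  using reach_closed by blast

lemma sep_lemma: "(x,y) \<in> (adj F)\<^sup>* \<Longrightarrow> (\<forall>s t. {s,t} \<in> F \<longrightarrow> (s\<in>A \<longleftrightarrow> t\<in>A)) \<Longrightarrow> (x\<in>A \<longleftrightarrow> y\<in>A)"
  by (induction rule: rtrancl_induct) auto

lemma bridge_by_sep: "\<forall>s t. {s,t} \<in> F \<longrightarrow> (s\<in>A \<longleftrightarrow> t\<in>A) \<Longrightarrow> (x\<in>A \<longleftrightarrow> y\<notin>A) \<Longrightarrow> (x,y) \<notin> (adj F)\<^sup>*"
  using sep_lemma by blast

lemma phylo_facts:
  assumes "phylo_tree X (V,E)"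
  shows "finite V" "\<And>e. e\<in>E \<Longrightarrow> \<exists>a b. a \<noteq> b \<and> a \<in> V \<and> b \<in> V \<and> e = {a, b}"
    "\<And>a b. a\<in>V \<Longrightarrow> b\<in>V \<Longrightarrow> (a, b) \<in> (adj E)\<^sup>*"
    "\<And>a b. {a,b} \<in> E \<Longrightarrow> (a, b) \<notin> (adj (E - {{a,b}}))\<^sup>*"
    "X \<subseteq> V" "\<And>v. v\<in>V \<Longrightarrow> v \<in> X \<longleftrightarrow> degree E v = 1"
    "\<And>v. v\<in>V \<Longrightarrow> v \<notin> X \<Longrightarrow> degree E v = 3"
  using assms unfolding phylo_tree_def is_tree_def by auto

lemma edge_facts:
  assumes "phylo_tree X (V,E)" "{a,b} \<in> E"
  shows "a \<noteq> b" "a \<in> V" "b \<in> V"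
proof -
  obtain x y where "x \<noteq> y" "x \<in> V" "y \<in> V" "{a,b} = {x,y}" using phylo_facts(2)[OF assms] by blast
  then show "a \<noteq> b" "a \<in> V" "b \<in> V" by (auto simp: doubleton_eq_iff)
qed

lemma nbr_finite: "phylo_tree X (V,E) \<Longrightarrow> finite {w. {z,w} \<in> E}"
proof -
  assume ph: "phylo_tree X (V,E)"
  have "{w. {z,w} \<in> E} \<subseteq> V" using edge_facts(3)[OF ph] by blast
  then show ?thesis using phylo_facts(1)[OF ph] finite_subset by blast
qed

lemma card_swap: "finite N \<Longrightarrow> a \<in> N \<Longrightarrow> c \<notin> N \<Longrightarrow> card (insert c (N - {a})) = card N"
proof -
  assume f: "finite N" and a: "a \<in> N" and c: "c \<notin> N"
  then have "card (insert c (N - {a})) = Suc (card (N - {a}))" by simp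
  also have "\<dots> = card N" using f a by (metis card_Suc_Diff1)
  finally show ?thesis .
qed

lemma nni_phylo:
  assumes ph: "phylo_tree X (V,E)" and uv: "{u,v} \<in> E" and ua: "{u,a} \<in> E" and av: "a \<noteq> v"
    and vc: "{v,c} \<in> E" and cu: "c \<noteq> u"
  shows "phylo_tree X (V, (E - {{u,a},{v,c}}) \<union> {{v,a},{u,c}})"
proof -
  define E' where "E' = (E - {{u,a},{v,c}}) \<union> {{v,a},{u,c}}"
  note br = phylo_facts(4)[OF ph]
  have "u \<noteq> v" "u \<noteq> a" "v \<noteq> c" "u \<in> V" "v \<in> V" "a \<in> V" "c \<in> V"
    using edge_facts[OF ph uv] edge_facts[OF ph ua] edge_facts[OF ph vc] by auto
  note ne = this
  have e1: "{u,a} \<in> E - {{u,v}}" using ua av by (auto simp: doubleton_eq_iff)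
  have e2: "{v,c} \<in> E - {{u,v}}" using vc cu by (auto simp: doubleton_eq_iff)
  have ac: "a \<noteq> c"
  proof
    assume "a = c"
    then have "(u,a) \<in> (adj (E - {{u,v}}))\<^sup>*" "(a,v) \<in> (adj (E - {{u,v}}))\<^sup>*"
      using e1 e2 by (auto intro!: adj_edge simp: insert_commute)
    then show False using br[OF uv] by (meson rtrancl_trans)
  qed
  have va: "{v,a} \<notin> E"
  proof
    assume "{v,a} \<in> E"
    then have "{a,v} \<in> E - {{u,v}}" using ne by (auto simp: doubleton_eq_iff insert_commute)
    then have "(u,a) \<in> (adj (E - {{u,v}}))\<^sup>*" "(a,v) \<in> (adj (E - {{u,v}}))\<^sup>*"
      using e1 by (auto intro!: adj_edge)
    then show False using br[OF uv] by (meson rtrancl_trans)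
  qed
  have uc: "{u,c} \<notin> E"
  proof
    assume "{u,c} \<in> E"
    then have "{u,c} \<in> E - {{u,v}}" using ne ac cu by (auto simp: doubleton_eq_iff)
    then have "(u,c) \<in> (adj (E - {{u,v}}))\<^sup>*" "(c,v) \<in> (adj (E - {{u,v}}))\<^sup>*"
      using e2 by (auto intro!: adj_edge simp: insert_commute)
    then show False using br[OF uv] by (meson rtrancl_trans)
  qed
  have edges: "\<forall>e\<in>E'. \<exists>x y. x \<noteq> y \<and> x \<in> V \<and> y \<in> V \<and> e = {x, y}"
    using phylo_facts(2)[OF ph] ne av cu unfolding E'_def by blast
  have sub: "adj E \<subseteq> (adj E')\<^sup>*"
  proof
    fix p assume "p \<in> adj E"
    then obtain x y where p: "p = (x,y)" "{x,y} \<in> E" by (cases p) auto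
    have uvE: "{u,v} \<in> E'" using uv av cu unfolding E'_def by (auto simp: doubleton_eq_iff)
    have vaE: "{v,a} \<in> E'" "{u,c} \<in> E'" unfolding E'_def by auto
    show "p \<in> (adj E')\<^sup>*"
    proof (cases "{x,y} = {u,a} \<or> {x,y} = {v,c}")
      case True
      have "(u,a) \<in> (adj E')\<^sup>*" "(a,u) \<in> (adj E')\<^sup>*" "(v,c) \<in> (adj E')\<^sup>*" "(c,v) \<in> (adj E')\<^sup>*"
        using uvE vaE by (meson adj_edge adj_sym rtrancl_trans)+
      then show ?thesis using True p by (auto simp: doubleton_eq_iff)
    next
      case False
      then have "{x,y} \<in> E'" using p unfolding E'_def by auto
      then show ?thesis using p by (auto intro: adj_edge)
    qed
  qed
  have conn: "\<forall>x\<in>V. \<forall>y\<in>V. (x, y) \<in> (adj E')\<^sup>*"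
  proof (intro ballI)
    fix x y assume "x \<in> V" "y \<in> V"
    then have "(x,y) \<in> (adj E)\<^sup>*" using phylo_facts(3)[OF ph] by blast
    then have "(x,y) \<in> ((adj E')\<^sup>*)\<^sup>*" using rtrancl_mono[OF sub] by blast
    then show "(x,y) \<in> (adj E')\<^sup>*" by simp
  qed
  have bridge: "\<forall>e\<in>E'. \<forall>x y. e = {x, y} \<longrightarrow> (x, y) \<notin> (adj (E' - {e}))\<^sup>*"
  proof (intro ballI allI impI)
    fix e x y assume eE: "e \<in> E'" and exy: "e = {x,y}"
    show "(x, y) \<notin> (adj (E' - {e}))\<^sup>*"
    proof (cases "e = {v,a}")
      case True
      define A where "A = reach (E - {{u,a}}) a"
      have aA: "a \<in> A" unfolding A_def reach_def by simp
      have uA: "u \<notin> A" using br[OF ua] unfolding A_def reach_def by (auto dest: adj_sym)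
      have vA: "v \<notin> A"
      proof
        assume "v \<in> A"
        moreover have "{v,u} \<in> E - {{u,a}}" using uv av by (auto simp: doubleton_eq_iff insert_commute)
        ultimately have "u \<in> A" unfolding A_def by (rule reach_step)
        then show False using uA by simp
      qed
      have cA: "c \<notin> A"
      proof
        assume "c \<in> A"
        moreover have "{c,v} \<in> E - {{u,a}}" using vc av ne by (auto simp: doubleton_eq_iff insert_commute)
        ultimately have "v \<in> A" unfolding A_def by (rule reach_step)
        then show False using vA by simp
      qed
      show ?thesis
      proof (rule bridge_by_sep[where A=A])
        show "\<forall>s t. {s,t} \<in> E' - {e} \<longrightarrow> (s\<in>A \<longleftrightarrow> t\<in>A)"
        proof (intro allI impI)
          fix s t assume "{s,t} \<in> E' - {e}"
          then have "{s,t} \<in> E - {{u,a}} \<or> {s,t} = {u,c}" unfolding E'_def using True by auto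
          then show "s\<in>A \<longleftrightarrow> t\<in>A"
          proof
            assume "{s,t} \<in> E - {{u,a}}" then show ?thesis unfolding A_def by (rule reach_closed)
          next
            assume "{s,t} = {u,c}" then show ?thesis using uA cA by (auto simp: doubleton_eq_iff)
          qed
        qed
        show "x\<in>A \<longleftrightarrow> y\<notin>A" using True exy aA vA by (auto simp: doubleton_eq_iff)
      qed
    next
      case F1: False
      show ?thesis
      proof (cases "e = {u,c}")
        case True
        define A where "A = reach (E - {{v,c}}) c"
        have cA: "c \<in> A" unfolding A_def reach_def by simp
        have vA: "v \<notin> A" using br[OF vc] unfolding A_def reach_def by (auto dest: adj_sym)
        have uA: "u \<notin> A"
        proof
          assume "u \<in> A"
          moreover have "{u,v} \<in> E - {{v,c}}" using uv cu by (auto simp: doubleton_eq_iff)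
          ultimately have "v \<in> A" unfolding A_def by (rule reach_step)
          then show False using vA by simp
        qed
        have aA: "a \<notin> A"
        proof
          assume "a \<in> A"
          moreover have "{a,u} \<in> E - {{v,c}}" using ua cu ne by (auto simp: doubleton_eq_iff insert_commute)
          ultimately have "u \<in> A" unfolding A_def by (rule reach_step)
          then show False using uA by simp
        qed
        show ?thesis
        proof (rule bridge_by_sep[where A=A])
          show "\<forall>s t. {s,t} \<in> E' - {e} \<longrightarrow> (s\<in>A \<longleftrightarrow> t\<in>A)"
          proof (intro allI impI)
            fix s t assume "{s,t} \<in> E' - {e}"
            then have "{s,t} \<in> E - {{v,c}} \<or> {s,t} = {v,a}" unfolding E'_def using True by auto
            then show "s\<in>A \<longleftrightarrow> t\<in>A"
            proof
              assume "{s,t} \<in> E - {{v,c}}" then show ?thesis unfolding A_def by (rule reach_closed)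
            next
              assume "{s,t} = {v,a}" then show ?thesis using vA aA by (auto simp: doubleton_eq_iff)
            qed
          qed
          show "x\<in>A \<longleftrightarrow> y\<notin>A" using True exy cA uA by (auto simp: doubleton_eq_iff)
        qed
      next
        case F2: False
        show ?thesis
        proof (cases "e = {u,v}")
          case True
          define E0 where "E0 = E - {{u,v},{u,a},{v,c}}"
          define A where "A = reach E0 u \<union> reach E0 c"
          have uA: "u \<in> A" unfolding A_def reach_def by simp
          have cA: "c \<in> A" unfolding A_def reach_def by simp
          have m1: "E0 \<subseteq> E - {{u,v}}" "E0 \<subseteq> E - {{v,c}}" "E0 \<subseteq> E - {{u,a}}" unfolding E0_def by auto
          have "v \<notin> reach E0 u" using br[OF uv] adj_mono[OF m1(1)] unfolding reach_def by blast
          moreover have "v \<notin> reach E0 c" using br[OF vc] adj_mono[OF m1(2)] unfolding reach_def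
            by (blast dest: adj_sym)
          ultimately have vA: "v \<notin> A" unfolding A_def by blast
          have "a \<notin> reach E0 u" using br[OF ua] adj_mono[OF m1(3)] unfolding reach_def by blast
          moreover have "a \<notin> reach E0 c"
          proof
            assume "a \<in> reach E0 c"
            then have "(c,a) \<in> (adj (E - {{u,v}}))\<^sup>*" using adj_mono[OF m1(1)] unfolding reach_def by blast
            then have "(a,c) \<in> (adj (E - {{u,v}}))\<^sup>*" by (rule adj_sym)
            moreover have "(u,a) \<in> (adj (E - {{u,v}}))\<^sup>*" "(c,v) \<in> (adj (E - {{u,v}}))\<^sup>*"
              using e1 e2 by (auto intro!: adj_edge simp: insert_commute)
            ultimately show False using br[OF uv] by (meson rtrancl_trans)
          qed
          ultimately have aA: "a \<notin> A" unfolding A_def by blast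
          show ?thesis
          proof (rule bridge_by_sep[where A=A])
            show "\<forall>s t. {s,t} \<in> E' - {e} \<longrightarrow> (s\<in>A \<longleftrightarrow> t\<in>A)"
            proof (intro allI impI)
              fix s t assume "{s,t} \<in> E' - {e}"
              then have "{s,t} \<in> E0 \<or> {s,t} = {v,a} \<or> {s,t} = {u,c}" unfolding E'_def E0_def using True by auto
              then show "s\<in>A \<longleftrightarrow> t\<in>A"
              proof (elim disjE)
                assume "{s,t} \<in> E0"
                then have "s \<in> reach E0 u \<longleftrightarrow> t \<in> reach E0 u" "s \<in> reach E0 c \<longleftrightarrow> t \<in> reach E0 c"
                  by (rule reach_closed)+
                then show ?thesis unfolding A_def by blast
              next
                assume "{s,t} = {v,a}" then show ?thesis using vA aA by (auto simp: doubleton_eq_iff)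
              next
                assume "{s,t} = {u,c}" then show ?thesis using uA cA by (auto simp: doubleton_eq_iff)
              qed
            qed
            show "x\<in>A \<longleftrightarrow> y\<notin>A" using True exy uA vA by (auto simp: doubleton_eq_iff)
          qed
        next
          case F3: False
          have eE0: "e \<in> E" "e \<noteq> {u,a}" "e \<noteq> {v,c}" using eE F1 F2 unfolding E'_def by auto
          define A where "A = reach (E - {e}) x"
          have xA: "x \<in> A" unfolding A_def reach_def by simp
          have yA: "y \<notin> A" using br eE0(1) exy unfolding A_def reach_def by blast
          have c1: "u \<in> A \<longleftrightarrow> v \<in> A" using reach_closed[of u v "E - {e}"] uv F3 unfolding A_def by auto
          have c2: "u \<in> A \<longleftrightarrow> a \<in> A" using reach_closed[of u a "E - {e}"] ua eE0 unfolding A_def by auto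
          have c3: "v \<in> A \<longleftrightarrow> c \<in> A" using reach_closed[of v c "E - {e}"] vc eE0 unfolding A_def by auto
          show ?thesis
          proof (rule bridge_by_sep[where A=A])
            show "\<forall>s t. {s,t} \<in> E' - {e} \<longrightarrow> (s\<in>A \<longleftrightarrow> t\<in>A)"
            proof (intro allI impI)
              fix s t assume "{s,t} \<in> E' - {e}"
              then have "{s,t} \<in> E - {e} \<or> {s,t} = {v,a} \<or> {s,t} = {u,c}" unfolding E'_def by auto
              then show "s\<in>A \<longleftrightarrow> t\<in>A"
              proof (elim disjE)
                assume "{s,t} \<in> E - {e}" then show ?thesis unfolding A_def by (rule reach_closed)
              next
                assume "{s,t} = {v,a}" then show ?thesis using c1 c2 by (auto simp: doubleton_eq_iff)
              next
                assume "{s,t} = {u,c}" then show ?thesis using c1 c3 by (auto simp: doubleton_eq_iff)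
              qed
            qed
            show "x\<in>A \<longleftrightarrow> y\<notin>A" using xA yA by simp
          qed
        qed
      qed
    qed
  qed
  let ?N = "\<lambda>E w. {z. {w,z} \<in> E}"
  have finN: "\<And>w. finite (?N E w)" using nbr_finite[OF ph] by blast
  have deg: "\<And>w. degree E' w = degree E w"
  proof -
    fix w
    have aNu: "a \<in> ?N E u" using ua by simp
    have cNv: "c \<in> ?N E v" using vc by simp
    have uNa: "u \<in> ?N E a" using ua by (simp add: insert_commute)
    have vNc: "v \<in> ?N E c" using vc by (simp add: insert_commute)
    have cNu: "c \<notin> ?N E u" using uc by simp
    have aNv: "a \<notin> ?N E v" using va by simp
    have vNa: "v \<notin> ?N E a" using va by (simp add: insert_commute)
    have uNc: "u \<notin> ?N E c" using uc by (simp add: insert_commute)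
    show "degree E' w = degree E w"
    proof (cases "w = u")
      case True
      then have H: "?N E' w = insert c (?N E u - {a})" unfolding E'_def using ne ac cu av
        by (auto simp: doubleton_eq_iff)
      show ?thesis unfolding degree_def H unfolding True by (rule card_swap[OF finN aNu cNu])
        
    next
      case nu: False
      show ?thesis
      proof (cases "w = v")
        case True
        then have H: "?N E' w = insert a (?N E v - {c})" unfolding E'_def using ne ac cu av
          by (auto simp: doubleton_eq_iff)
        show ?thesis unfolding degree_def H unfolding True by (rule card_swap[OF finN cNv aNv])
          
      next
        case nv: False
        show ?thesis
        proof (cases "w = a")
          case True
          then have H: "?N E' w = insert v (?N E a - {u})" unfolding E'_def using ne ac cu av nu nv
            by (auto simp: doubleton_eq_iff)
          show ?thesis unfolding degree_def H unfolding True by (rule card_swap[OF finN uNa vNa])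
            
        next
          case na: False
          show ?thesis
          proof (cases "w = c")
            case True
            then have H: "?N E' w = insert u (?N E c - {v})" unfolding E'_def using ne ac cu av nu nv na
              by (auto simp: doubleton_eq_iff)
            show ?thesis unfolding degree_def H unfolding True by (rule card_swap[OF finN vNc uNc])
              
          next
            case nc: False
            have "?N E' w = ?N E w" unfolding E'_def using nu nv na nc
              by (auto simp: doubleton_eq_iff)
            then show ?thesis unfolding degree_def by simp
          qed
        qed
      qed
    qed
  qed
  show ?thesis
    unfolding E'_def[symmetric] phylo_tree_def is_tree_def
    using phylo_facts[OF ph] edges conn bridge deg by auto
qed

lemma avoid_lemma:
  "(r,y) \<in> (adj F)\<^sup>* \<Longrightarrow> (\<forall>w. (r,w) \<in> (adj F)\<^sup>* \<longrightarrow> w \<noteq> a) \<Longrightarrow> (r,y) \<in> (adj (F - {f. a \<in> f}))\<^sup>*"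
proof (induction rule: rtrancl_induct)
  case base then show ?case by simp
next
  case (step y z)
  have rz: "(r,z) \<in> (adj F)\<^sup>*" using step(1,2) by (rule rtrancl_into_rtrancl)
  have "y \<noteq> a" "z \<noteq> a" using step(1) rz step(4) by auto
  then have "(y,z) \<in> adj (F - {f. a \<in> f})" using step(2) by simp
  then show ?case using step by (meson rtrancl_into_rtrancl)
qed

lemma edge_split:
  assumes ph: "phylo_tree X (V,E)" and r: "r \<in> V" and e: "e \<in> E"
  shows "\<exists>a b. e = {a,b} \<and> a \<noteq> b \<and> a \<in> V \<and> a \<notin> reach (E - {e}) r \<and> b \<in> reach (E - {e}) r"
proof -
  obtain a b where ab: "a \<noteq> b" "a \<in> V" "b \<in> V" "e = {a,b}" using phylo_facts(2)[OF ph e] by blast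
  let ?R = "reach (E - {e}) r"
  have c1: "a \<in> ?R \<or> b \<in> ?R"
  proof (rule ccontr)
    assume n: "\<not> (a \<in> ?R \<or> b \<in> ?R)"
    have "(r,a) \<in> (adj E)\<^sup>*" using phylo_facts(3)[OF ph r ab(2)] .
    moreover have "r \<in> ?R" unfolding reach_def by simp
    moreover have "a \<notin> ?R" using n by blast
    ultimately obtain s t where st: "{s,t} \<in> E" "s \<in> ?R" "t \<notin> ?R" using cut_lemma[of r a E ?R] by blast
    show False
    proof (cases "{s,t} = e")
      case True then show False using n st ab by (auto simp: doubleton_eq_iff)
    next
      case False then show False using st reach_step[of s "E - {e}" r t] by blast
    qed
  qed
  have c2: "\<not> (a \<in> ?R \<and> b \<in> ?R)"
  proof
    assume "a \<in> ?R \<and> b \<in> ?R"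
    then have "(r,a) \<in> (adj (E - {e}))\<^sup>*" "(r,b) \<in> (adj (E - {e}))\<^sup>*" unfolding reach_def by auto
    then have "(a,b) \<in> (adj (E - {e}))\<^sup>*" by (meson adj_sym rtrancl_trans)
    then show False using phylo_facts(4)[OF ph] e ab(4) by blast
  qed
  show ?thesis
  proof (cases "a \<in> ?R")
    case True
    then have "b \<notin> ?R" using c2 by blast
    then have "e = {b,a} \<and> b \<noteq> a \<and> b \<in> V \<and> b \<notin> ?R \<and> a \<in> ?R"
      using True ab by (simp add: insert_commute)
    then show ?thesis by blast
  next
    case False
    then have "b \<in> ?R" using c1 by blast
    then have "e = {a,b} \<and> a \<noteq> b \<and> a \<in> V \<and> a \<notin> ?R \<and> b \<in> ?R"
      using False ab by simp
    then show ?thesis by blast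
  qed
qed

lemma tree_edges_le:
  assumes ph: "phylo_tree X (V,E)" and r: "r \<in> V"
  shows "card E \<le> card V - 1"
proof -
  define far where "far e = (SOME a. \<exists>b. e = {a,b} \<and> a \<noteq> b \<and> a \<in> V \<and> a \<notin> reach (E - {e}) r \<and> b \<in> reach (E - {e}) r)" for e
  have farP: "\<exists>b. e = {far e,b} \<and> far e \<noteq> b \<and> far e \<in> V \<and> far e \<notin> reach (E - {e}) r \<and> b \<in> reach (E - {e}) r"
    if "e \<in> E" for e
    unfolding far_def by (rule someI_ex) (rule edge_split[OF ph r that])
  have inj: "inj_on far E"
  proof (rule inj_onI)
    fix e1 e2 assume e1: "e1 \<in> E" and e2: "e2 \<in> E" and eq: "far e1 = far e2"
    show "e1 = e2"
    proof (rule ccontr)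
      assume ne: "e1 \<noteq> e2"
      define a where "a = far e2"
      obtain b2 where b2: "e2 = {a,b2}" "a \<notin> reach (E - {e2}) r" "b2 \<in> reach (E - {e2}) r"
        using farP[OF e2] unfolding a_def by blast
      have a1: "a \<in> e1" "a \<notin> reach (E - {e1}) r" using farP[OF e1] eq unfolding a_def by auto
      have "(r,b2) \<in> (adj (E - {e2} - {f. a \<in> f}))\<^sup>*"
        using avoid_lemma[of r b2 "E - {e2}" a] b2 unfolding reach_def by blast
      moreover have "E - {e2} - {f. a \<in> f} \<subseteq> E - {e1}" using a1 by auto
      ultimately have "(r,b2) \<in> (adj (E - {e1}))\<^sup>*" using adj_mono by blast
      moreover have "{b2,a} \<in> E - {e1}" using b2(1) e2 ne by (auto simp: insert_commute)
      ultimately have "a \<in> reach (E - {e1}) r" unfolding reach_def by (auto intro: rtrancl_into_rtrancl)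
      then show False using a1 by simp
    qed
  qed
  have img: "far ` E \<subseteq> V - {r}"
  proof
    fix x assume "x \<in> far ` E"
    then obtain e where e: "e \<in> E" "x = far e" by blast
    have "r \<in> reach (E - {e}) r" unfolding reach_def by simp
    then show "x \<in> V - {r}" using farP[OF e(1)] e(2) by auto
  qed
  have "card E \<le> card (V - {r})"
    using card_inj_on_le[OF inj img] phylo_facts(1)[OF ph] by blast
  then show ?thesis using r phylo_facts(1)[OF ph] by simp
qed

lemma finite_E: "phylo_tree X (V,E) \<Longrightarrow> finite E"
proof -
  assume ph: "phylo_tree X (V,E)"
  have "E \<subseteq> Pow V" using edge_facts(2,3)[OF ph] phylo_facts(2)[OF ph] by blast
  moreover have "finite (Pow V)" using phylo_facts(1)[OF ph] by simp
  ultimately show ?thesis by (rule finite_subset)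
qed

lemma adj_card_le:
  assumes ph: "phylo_tree X (V,E)"
  shows "card (adj E) \<le> 2 * card E"
proof -
  define P1 where "P1 = adj E \<inter> {(a,b). a < b}"
  define P2 where "P2 = adj E \<inter> {(a,b). b < a}"
  have split: "adj E = P1 \<union> P2"
    unfolding P1_def P2_def using edge_facts(1)[OF ph] by (auto simp: adj_def) (meson linorder_neqE_nat)
  have fE: "finite E" using finite_E[OF ph] .
  have "card P1 \<le> card E"
  proof (rule card_inj_on_le[where f="\<lambda>(a,b). {a,b}"])
    show "inj_on (\<lambda>(a,b). {a,b}) P1" unfolding P1_def by (rule inj_onI) (auto simp: doubleton_eq_iff)
    show "(\<lambda>(a,b). {a,b}) ` P1 \<subseteq> E" unfolding P1_def by (auto simp: adj_def)
  qed (rule fE)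
  moreover have "card P2 \<le> card E"
  proof (rule card_inj_on_le[where f="\<lambda>(a,b). {a,b}"])
    show "inj_on (\<lambda>(a,b). {a,b}) P2" unfolding P2_def by (rule inj_onI) (auto simp: doubleton_eq_iff)
    show "(\<lambda>(a,b). {a,b}) ` P2 \<subseteq> E" unfolding P2_def by (auto simp: adj_def)
  qed (rule fE)
  ultimately show ?thesis using split card_Un_le[of P1 P2] by simp
qed

lemma adj_card_eq:
  assumes ph: "phylo_tree X (V,E)"
  shows "card (adj E) = (\<Sum>v\<in>V. degree E v)"
proof -
  have "adj E = Sigma V (\<lambda>v. {w. {v,w} \<in> E})"
    using edge_facts(2)[OF ph] by (auto simp: adj_def)
  then show ?thesis unfolding degree_def
    using card_SigmaI[of V "\<lambda>v. {w. {v,w} \<in> E}"] phylo_facts(1)[OF ph] nbr_finite[OF ph] by simp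
qed

lemma V_bound:
  assumes ph: "phylo_tree X (V,E)" and ne: "X \<noteq> {}"
  shows "card V \<le> 2 * card X"
proof -
  have fV: "finite V" and XV: "X \<subseteq> V" using phylo_facts[OF ph] by auto
  obtain r where r: "r \<in> V" using ne XV by blast
  have "(\<Sum>v\<in>V. degree E v) = (\<Sum>v\<in>X. degree E v) + (\<Sum>v\<in>V - X. degree E v)"
    using sum.subset_diff[OF XV fV, of "degree E"] by (simp add: add.commute)
  also have "(\<Sum>v\<in>X. degree E v) = (\<Sum>v\<in>X. 1)"
    by (rule sum.cong) (use phylo_facts(6)[OF ph] XV in blast)+
  also have "(\<Sum>v\<in>V - X. degree E v) = (\<Sum>v\<in>V - X. 3)"
    by (rule sum.cong) (use phylo_facts(7)[OF ph] in blast)+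
  finally have "card X + 3 * card (V - X) \<le> 2 * card E"
    using adj_card_eq[OF ph] adj_card_le[OF ph] by simp
  moreover have "card E \<le> card V - 1" by (rule tree_edges_le[OF ph r])
  moreover have "card (V - X) = card V - card X" using XV fV by (simp add: card_Diff_subset finite_subset)
  moreover have "card X \<le> card V" using XV fV card_mono by blast
  moreover have "card V > 0" using r fV card_gt_0_iff by blast
  ultimately show ?thesis by linarith
qed

fun elist :: "nat list \<Rightarrow> nat set list" where
  "elist (x # y # xs) = {x,y} # elist (y # xs)"
| "elist _ = []"

lemma elist_Cons: "elist (x # ys) = (if ys = [] then [] else {x, hd ys} # elist ys)"
  by (cases ys) auto

lemma set_elist_append:
  "set (elist (xs @ ys)) = set (elist xs) \<union> set (elist ys) \<union> (if xs \<noteq> [] \<and> ys \<noteq> [] then {{last xs, hd ys}} else {})"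
proof (induction xs rule: induct_list012)
  case 1 then show ?case by simp
next
  case (2 x) then show ?case by (cases ys) auto
next
  case (3 x y zs)
  have IH: "set (elist (y # zs @ ys)) = set (elist (y # zs)) \<union> set (elist ys) \<union> (if ys \<noteq> [] then {{last (y # zs), hd ys}} else {})"
    using 3(2) by simp
  show ?case by (simp add: IH)
qed

lemma elist_sub: "f \<in> set (elist ws) \<Longrightarrow> f \<subseteq> set ws"
  by (induction ws rule: elist.induct) auto

lemma length_elist: "length (elist ws) = length ws - 1"
  by (induction ws rule: elist.induct) auto

definition CE :: "nat set set \<Rightarrow> nat \<Rightarrow> nat set set" where
  "CE F r = {f \<in> F. \<exists>a\<in>f. a \<in> reach F r}"

lemma reach_refl: "r \<in> reach F r" unfolding reach_def by simp

lemma reach_trans: "x \<in> reach F r \<Longrightarrow> y \<in> reach F x \<Longrightarrow> y \<in> reach F r"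
  unfolding reach_def by (auto intro: rtrancl_trans)

lemma reach_sym: "x \<in> reach F r \<Longrightarrow> r \<in> reach F x"
  unfolding reach_def by (simp add: adj_sym)

lemma reach_mono: "F \<subseteq> G \<Longrightarrow> x \<in> reach F r \<Longrightarrow> x \<in> reach G r"
  unfolding reach_def using adj_mono by blast

lemma reach_insert:
  assumes "x \<in> reach (insert {a,b} F) r"
  shows "x \<in> reach F r \<or> (a \<in> reach F r \<and> x \<in> reach F b) \<or> (b \<in> reach F r \<and> x \<in> reach F a)"
proof -
  have "(r,x) \<in> (adj (insert {a,b} F))\<^sup>*" using assms unfolding reach_def by simp
  then show ?thesis
  proof (induction rule: rtrancl_induct)
    case base then show ?case by (simp add: reach_refl)
  next
    case (step y z)
    have st: "{y,z} \<in> F \<or> {y,z} = {a,b}" using step(2) by auto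
    show ?case
    proof (cases "{y,z} \<in> F")
      case True
      then have zy: "z \<in> reach F y" unfolding reach_def by (auto intro: r_into_rtrancl)
      show ?thesis using step(3) reach_trans[OF _ zy, of r] reach_trans[OF _ zy, of b] reach_trans[OF _ zy, of a] by blast
    next
      case False
      then have yz: "(y = a \<and> z = b) \<or> (y = b \<and> z = a)" using st by (auto simp: doubleton_eq_iff)
      then show ?thesis using step(3) reach_refl[of a F] reach_refl[of b F] by blast
    qed
  qed
qed

lemma reach_insert_cases:
  "reach (insert {a,b} F) r =
     reach F r \<union> (if a \<in> reach F r then reach F b else {}) \<union> (if b \<in> reach F r then reach F a else {})"
proof
  show "reach (insert {a,b} F) r \<subseteq> reach F r \<union> (if a \<in> reach F r then reach F b else {}) \<union> (if b \<in> reach F r then reach F a else {})"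
  proof
    fix x assume "x \<in> reach (insert {a,b} F) r"
    from reach_insert[OF this] show "x \<in> reach F r \<union> (if a \<in> reach F r then reach F b else {}) \<union> (if b \<in> reach F r then reach F a else {})"
      by auto
  qed
next
  have sub: "F \<subseteq> insert {a,b} F" by auto
  have ab: "b \<in> reach (insert {a,b} F) a" "a \<in> reach (insert {a,b} F) b"
    unfolding reach_def by (auto simp: insert_commute)
  show "reach F r \<union> (if a \<in> reach F r then reach F b else {}) \<union> (if b \<in> reach F r then reach F a else {}) \<subseteq> reach (insert {a,b} F) r"
  proof (intro Un_least)
    show "reach F r \<subseteq> reach (insert {a,b} F) r" using reach_mono[OF sub] by blast
    show "(if a \<in> reach F r then reach F b else {}) \<subseteq> reach (insert {a,b} F) r"
    proof (cases "a \<in> reach F r")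
      case True
      have "a \<in> reach (insert {a,b} F) r" using True reach_mono[OF sub] by blast
      then have bR: "b \<in> reach (insert {a,b} F) r" by (rule reach_trans[OF _ ab(1)])
      show ?thesis using True by (auto intro: reach_trans[OF bR] reach_mono[OF sub])
    qed simp
    show "(if b \<in> reach F r then reach F a else {}) \<subseteq> reach (insert {a,b} F) r"
    proof (cases "b \<in> reach F r")
      case True
      have "b \<in> reach (insert {a,b} F) r" using True reach_mono[OF sub] by blast
      then have aR: "a \<in> reach (insert {a,b} F) r" by (rule reach_trans[OF _ ab(2)])
      show ?thesis using True by (auto intro: reach_trans[OF aR] reach_mono[OF sub])
    qed simp
  qed
qed

definition WP :: "nat set set \<Rightarrow> nat \<Rightarrow> nat list \<Rightarrow> bool" where
  "WP F r ws \<longleftrightarrow> ws \<noteq> [] \<and> hd ws = r \<and> last ws = r \<and> set (elist ws) \<subseteq> F \<and>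
     CE F r \<subseteq> set (elist ws) \<and> length ws \<le> 2 * card (CE F r) + 1"

lemma in_walk:
  assumes "a \<in> reach F r" "CE F r \<subseteq> set (elist ws)" "ws \<noteq> []" "hd ws = r"
  shows "a \<in> set ws"
proof (cases "a = r")
  case True then show ?thesis using assms(3,4) hd_in_set by blast
next
  case False
  have "(r,a) \<in> (adj F)\<^sup>*" using assms(1) unfolding reach_def by simp
  then obtain y where y: "(r,y) \<in> (adj F)\<^sup>*" "(y,a) \<in> adj F" using False by (metis rtranclE)
  then have "{y,a} \<in> CE F r" unfolding CE_def reach_def by auto
  then have "{y,a} \<in> set (elist ws)" using assms(2) by blast
  then show ?thesis using elist_sub by blast
qed

lemma CE_sub: "CE F r \<subseteq> F" unfolding CE_def by blast

lemma cover_step: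
  assumes fin: "finite F" and shape: "\<forall>f\<in>F. \<exists>x y. f = {x,y}" and eF: "{a,b} \<notin> F"
    and IH: "\<And>r. \<exists>ws. WP F r ws" and aR: "a \<in> reach F r"
  shows "\<exists>ws. WP (insert {a,b} F) r ws"
proof -
  let ?F' = "insert {a,b} F"
  obtain W where W: "WP F r W" using IH by blast
  have aW: "a \<in> set W" using in_walk[OF aR] W unfolding WP_def by blast
  obtain W1 W2 where W12: "W = W1 @ a # W2" using split_list[OF aW] by blast
  have finCE: "finite (CE F x)" for x using fin CE_sub finite_subset by blast
  have eCE: "{a,b} \<notin> CE F x" for x using eF CE_sub by blast
  show ?thesis
  proof (cases "b \<in> reach F r")
    case True
    have "reach F b \<subseteq> reach F r" "reach F a \<subseteq> reach F r" using True aR reach_trans by blast+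
    then have R: "reach ?F' r = reach F r" unfolding reach_insert_cases using aR True by auto
    have CE': "CE ?F' r = insert {a,b} (CE F r)" unfolding CE_def R using aR by auto
    define W' where "W' = W1 @ a # b # a # W2"
    have setW': "set (elist W') = insert {a,b} (set (elist W))"
      unfolding W'_def W12 set_elist_append by (auto simp: insert_commute)
    have "WP ?F' r W'"
      unfolding WP_def
    proof (intro conjI)
      show "W' \<noteq> []" unfolding W'_def by simp
      show "hd W' = r" using W unfolding WP_def W'_def W12 by (cases W1) auto
      show "last W' = r" using W unfolding WP_def W'_def W12 by (cases W2) auto
      show "set (elist W') \<subseteq> ?F'" using W setW' unfolding WP_def by auto
      show "CE ?F' r \<subseteq> set (elist W')" using W setW' CE' unfolding WP_def by auto
      have "length W' = length W + 2" unfolding W'_def W12 by simp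
      moreover have "card (CE ?F' r) = Suc (card (CE F r))" unfolding CE' using finCE eCE by simp
      ultimately show "length W' \<le> 2 * card (CE ?F' r) + 1" using W unfolding WP_def by simp
    qed
    then show ?thesis by blast
  next
    case False
    obtain Wb where Wb: "WP F b Wb" using IH by blast
    have R: "reach ?F' r = reach F r \<union> reach F b" unfolding reach_insert_cases using aR False by auto
    have CE': "CE ?F' r = insert {a,b} (CE F r \<union> CE F b)" unfolding CE_def R using aR by auto
    have disj: "CE F r \<inter> CE F b = {}"
    proof (rule ccontr)
      assume "CE F r \<inter> CE F b \<noteq> {}"
      then obtain f where f: "f \<in> F" "\<exists>x\<in>f. x \<in> reach F r" "\<exists>x\<in>f. x \<in> reach F b"
        unfolding CE_def by blast
      obtain x y where xy: "f = {x,y}" using shape f(1) by blast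
      have c1: "x \<in> reach F r \<longleftrightarrow> y \<in> reach F r" "x \<in> reach F b \<longleftrightarrow> y \<in> reach F b"
        using reach_closed[of x y F] f(1) xy by auto
      have "x \<in> reach F r" "x \<in> reach F b" using f(2,3) c1 xy by auto
      then have "b \<in> reach F r" using reach_sym reach_trans by blast
      then show False using False by simp
    qed
    define W' where "W' = W1 @ a # Wb @ a # W2"
    have Wbp: "Wb \<noteq> []" "hd Wb = b" "last Wb = b" using Wb unfolding WP_def by auto
    have setW': "set (elist W') = insert {a,b} (set (elist W) \<union> set (elist Wb))"
    proof -
      have "set (elist (a # Wb @ a # W2)) = insert {a, b} (set (elist (Wb @ a # W2)))"
        using Wbp by (simp add: elist_Cons)
      also have "set (elist (Wb @ a # W2)) = set (elist Wb) \<union> set (elist (a # W2)) \<union> {{b, a}}"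
        using Wbp unfolding set_elist_append by simp
      finally have X: "set (elist (a # Wb @ a # W2)) = insert {a,b} (set (elist Wb) \<union> set (elist (a # W2)))"
        by (auto simp: insert_commute)
      show ?thesis unfolding W'_def W12 set_elist_append[of W1] X by auto
    qed
    have "WP ?F' r W'"
      unfolding WP_def
    proof (intro conjI)
      show "W' \<noteq> []" unfolding W'_def by simp
      show "hd W' = r" using W unfolding WP_def W'_def W12 by (cases W1) auto
      show "last W' = r" using W unfolding WP_def W'_def W12 by (cases W2) auto
      show "set (elist W') \<subseteq> ?F'" using W Wb setW' unfolding WP_def by auto
      show "CE ?F' r \<subseteq> set (elist W')" using W Wb setW' CE' unfolding WP_def by auto
      have "length W' = length W + length Wb + 1" unfolding W'_def W12 by simp
      moreover have "card (CE ?F' r) = Suc (card (CE F r) + card (CE F b))"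
        unfolding CE' using finCE eCE disj by (simp add: card_Un_disjoint)
      ultimately show "length W' \<le> 2 * card (CE ?F' r) + 1" using W Wb unfolding WP_def by simp
    qed
    then show ?thesis by blast
  qed
qed

lemma cover_walk:
  "finite F \<Longrightarrow> \<forall>f\<in>F. \<exists>x y. f = {x,y} \<Longrightarrow> \<exists>ws. WP F r ws"
proof (induction F arbitrary: r rule: finite_induct)
  case empty
  have "WP {} r [r]" unfolding WP_def CE_def by simp
  then show ?case by blast
next
  case (insert e F)
  obtain a b where e: "e = {a,b}" using insert.prems by blast
  have shape: "\<forall>f\<in>F. \<exists>x y. f = {x,y}" using insert.prems by blast
  have IH: "\<And>r. \<exists>ws. WP F r ws" using insert.IH shape by blast
  show ?case
  proof (cases "a \<in> reach F r")
    case True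
    then show ?thesis using cover_step[OF insert.hyps(1) shape _ IH True] insert.hyps(2) e by blast
  next
    case nA: False
    show ?thesis
    proof (cases "b \<in> reach F r")
      case True
      have "{b,a} \<notin> F" using insert.hyps(2) e by (simp add: insert_commute)
      then show ?thesis using cover_step[OF insert.hyps(1) shape _ IH True] e by (simp add: insert_commute)
    next
      case nB: False
      obtain W where W: "WP F r W" using IH by blast
      have R: "reach (insert e F) r = reach F r" unfolding e reach_insert_cases using nA nB by auto
      have CE': "CE (insert e F) r = CE F r" unfolding CE_def R using nA nB e by auto
      have "WP (insert e F) r W" using W unfolding WP_def CE' by auto
      then show ?thesis by blast
    qed
  qed
qed

definition Sf :: "nat set set \<Rightarrow> nat \<Rightarrow> nat \<Rightarrow> nat set" where
  "Sf E u v = {w. (v, w) \<in> (adj (E - {{u, v}}))\<^sup>*}"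

definition ERf :: "nat set set \<Rightarrow> nat \<Rightarrow> nat \<Rightarrow> nat \<Rightarrow> nat \<Rightarrow> nat set set" where
  "ERf E u v p q = ({e \<in> E. e \<inter> Sf E u v = {}} - {{u, p}, {u, q}}) \<union> {{p, q}}"

definition Gs :: "nat set set \<Rightarrow> nat \<Rightarrow> nat \<Rightarrow> nat \<Rightarrow> nat \<Rightarrow> nat set \<Rightarrow> nat set set" where
  "Gs E u v p q e = {f \<in> E. f \<subseteq> Sf E u v} \<union> (ERf E u v p q - {e}) \<union> ((\<lambda>w. {u,w}) ` e) \<union> {{u,v}}"

locale sprs =
  fixes X V E u v p q
  assumes ph: "phylo_tree X (V,E)" and uX: "u \<notin> X" and uv: "{u,v} \<in> E" and up: "{u,p} \<in> E"
    and uq: "{u,q} \<in> E" and pq: "p \<noteq> q" and pv: "p \<noteq> v" and qv: "q \<noteq> v"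
begin

abbreviation "S \<equiv> Sf E u v"
abbreviation "ER \<equiv> ERf E u v p q"
abbreviation "G \<equiv> Gs E u v p q"

lemma basic: "u \<in> V" "v \<in> V" "p \<in> V" "q \<in> V" "u \<noteq> v" "u \<noteq> p" "u \<noteq> q"
  using edge_facts[OF ph uv] edge_facts[OF ph up] edge_facts[OF ph uq] by auto

lemma Nu: "{w. {u,w} \<in> E} = {v,p,q}"
proof -
  have d: "degree E u = 3" using phylo_facts(7)[OF ph] basic uX by blast
  have sub: "{v,p,q} \<subseteq> {w. {u,w} \<in> E}" using uv up uq by auto
  have c: "card {v,p,q} = 3" using pq pv qv by auto
  show ?thesis using card_subset_eq[OF nbr_finite[OF ph] sub] c d unfolding degree_def by simp
qed

lemma br: "{a,b} \<in> E \<Longrightarrow> (a, b) \<notin> (adj (E - {{a,b}}))\<^sup>*"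
  using phylo_facts(4)[OF ph] by blast

lemma vS: "v \<in> S" unfolding Sf_def by simp

lemma S_step: "s \<in> S \<Longrightarrow> {s,t} \<in> E \<Longrightarrow> {s,t} \<noteq> {u,v} \<Longrightarrow> t \<in> S"
proof -
  assume a: "s \<in> S" "{s,t} \<in> E" "{s,t} \<noteq> {u,v}"
  then have st: "(s,t) \<in> adj (E - {{u,v}})" by simp
  have "(v,s) \<in> (adj (E - {{u,v}}))\<^sup>*" using a(1) unfolding Sf_def by simp
  then have "(v,t) \<in> (adj (E - {{u,v}}))\<^sup>*" using st by (rule rtrancl_into_rtrancl)
  then show "t \<in> S" unfolding Sf_def by simp
qed

lemma uS: "u \<notin> S"
  using br[OF uv] adj_sym unfolding Sf_def by blast

lemma pS: "p \<notin> S"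
proof
  assume "p \<in> S"
  moreover have "{p,u} \<in> E" "{p,u} \<noteq> {u,v}" using up pv by (auto simp: insert_commute doubleton_eq_iff)
  ultimately have "u \<in> S" using S_step by blast
  then show False using uS by simp
qed

lemma qS: "q \<notin> S"
proof
  assume "q \<in> S"
  moreover have "{q,u} \<in> E" "{q,u} \<noteq> {u,v}" using uq qv by (auto simp: insert_commute doubleton_eq_iff)
  ultimately have "u \<in> S" using S_step by blast
  then show False using uS by simp
qed

lemma pqE: "{p,q} \<notin> E"
proof
  assume pqE: "{p,q} \<in> E"
  have e1: "{u,q} \<in> E - {{u,p}}" using uq pq by (auto simp: doubleton_eq_iff)
  have "{p,q} \<noteq> {u,p}" using basic pq by (auto simp: doubleton_eq_iff)
  then have e2: "{q,p} \<in> E - {{u,p}}" using pqE by (simp add: insert_commute)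
  have "(u,q) \<in> (adj (E - {{u,p}}))\<^sup>*" using e1 by (rule adj_edge)
  moreover have "(q,p) \<in> (adj (E - {{u,p}}))\<^sup>*" using e2 by (rule adj_edge)
  ultimately have "(u,p) \<in> (adj (E - {{u,p}}))\<^sup>*" by (rule rtrancl_trans)
  then show False using br[OF up] by blast
qed

lemma ER_edge:
  assumes "f \<in> ER"
  shows "\<exists>x y. f = {x,y} \<and> x \<noteq> y \<and> x \<in> V \<and> y \<in> V \<and> x \<notin> S \<and> y \<notin> S \<and> x \<noteq> u \<and> y \<noteq> u"
proof (cases "f = {p,q}")
  case True then show ?thesis using pq basic pS qS by blast
next
  case False
  then have f: "f \<in> E" "f \<inter> S = {}" "f \<noteq> {u,p}" "f \<noteq> {u,q}" using assms unfolding ERf_def by auto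
  obtain x y where xy: "x \<noteq> y" "x \<in> V" "y \<in> V" "f = {x,y}" using phylo_facts(2)[OF ph f(1)] by blast
  have "x \<noteq> u"
  proof
    assume "x = u"
    then have "y \<in> {v,p,q}" using Nu f(1) xy by blast
    then show False using f xy vS \<open>x = u\<close> by auto
  qed
  moreover have "y \<noteq> u"
  proof
    assume "y = u"
    then have fx: "f = {u,x}" using xy by (simp add: insert_commute)
    then have "x \<in> {v,p,q}" using Nu f(1) by blast
    then show False using f fx vS by auto
  qed
  ultimately show ?thesis using xy f(2) by blast
qed

lemma ER_finite: "finite ER"
proof -
  have "ER \<subseteq> insert {p,q} E" unfolding ERf_def by auto
  then show ?thesis using finite_E[OF ph] finite_subset by blast
qed

lemma ER_shape: "\<forall>f\<in>ER. \<exists>x y. f = {x,y}"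
  using ER_edge by blast

lemma E_split: "e \<in> E \<Longrightarrow> e \<subseteq> S \<or> e \<inter> S = {} \<or> e = {u,v}"
proof -
  assume e: "e \<in> E"
  obtain x y where xy: "x \<noteq> y" "e = {x,y}" using phylo_facts(2)[OF ph e] by blast
  show ?thesis
  proof (cases "x \<in> S \<longleftrightarrow> y \<in> S")
    case True then show ?thesis using xy by auto
  next
    case False
    have e2: "{y,x} \<in> E" using e xy by (simp add: insert_commute)
    have "{x,y} = {u,v}"
    proof (rule ccontr)
      assume ne: "{x,y} \<noteq> {u,v}"
      then have ne2: "{y,x} \<noteq> {u,v}" by (simp add: insert_commute)
      show False
      proof (cases "x \<in> S")
        case True then show False using S_step[OF True _ ne] e xy False by simp
      next
        case nx: False
        then have "y \<in> S" using False by blast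
        then show False using S_step[OF _ e2 ne2] nx by blast
      qed
    qed
    then show ?thesis using xy by simp
  qed
qed

lemma G_pq: "G {p,q} = E"
proof -
  have "G {p,q} = {f \<in> E. f \<subseteq> S} \<union> ({e \<in> E. e \<inter> S = {}} - {{u, p}, {u, q}}) \<union> {{u,p},{u,q}} \<union> {{u,v}}"
    unfolding Gs_def ERf_def using pqE by auto
  also have "\<dots> = E"
  proof
    show "{f \<in> E. f \<subseteq> S} \<union> ({e \<in> E. e \<inter> S = {}} - {{u, p}, {u, q}}) \<union> {{u,p},{u,q}} \<union> {{u,v}} \<subseteq> E"
      using up uq uv by auto
    show "E \<subseteq> {f \<in> E. f \<subseteq> S} \<union> ({e \<in> E. e \<inter> S = {}} - {{u, p}, {u, q}}) \<union> {{u,p},{u,q}} \<union> {{u,v}}"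
      using E_split by blast
  qed
  finally show ?thesis .
qed

lemma reachER_sub: "x \<in> reach ER p \<Longrightarrow> x \<notin> S \<and> x \<noteq> u"
proof -
  assume "x \<in> reach ER p"
  then have "(p,x) \<in> (adj ER)\<^sup>*" unfolding reach_def by simp
  then show ?thesis
  proof (induction rule: rtrancl_induct)
    case base then show ?case using pS basic by simp
  next
    case (step y z)
    from step(2) have yz: "{y,z} \<in> ER" by (simp only: adj_iff)
    obtain a b where ab: "{y,z} = {a,b}" "a \<notin> S" "b \<notin> S" "a \<noteq> u" "b \<noteq> u"
      using ER_edge[OF yz] by blast
    have "z \<in> {a,b}" using ab(1) by auto
    then show ?case using ab by blast
  qed
qed

lemma ER_conn: "x \<in> V \<Longrightarrow> x \<notin> S \<Longrightarrow> x \<noteq> u \<Longrightarrow> x \<in> reach ER p"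
proof (rule ccontr)
  assume x: "x \<in> V" "x \<notin> S" "x \<noteq> u" and nx: "x \<notin> reach ER p"
  define K where "K = reach ER p"
  define A where "A = K \<union> {u} \<union> S"
  have pK: "p \<in> K" unfolding K_def by (rule reach_refl)
  have qK: "q \<in> K"
  proof -
    have "{p,q} \<in> ER" unfolding ERf_def by simp
    then show ?thesis using reach_step[OF pK[unfolded K_def]] unfolding K_def by blast
  qed
  have "(p,x) \<in> (adj E)\<^sup>*" using phylo_facts(3)[OF ph] basic x by blast
  moreover have "p \<in> A" "x \<notin> A" using pK x nx unfolding A_def K_def by auto
  ultimately obtain s t where st: "{s,t} \<in> E" "s \<in> A" "t \<notin> A" using cut_lemma[of p x E A] by blast
  have tK: "t \<notin> K" "t \<noteq> u" "t \<notin> S" using st(3) unfolding A_def by auto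
  show False
  proof (cases "s \<in> S")
    case True
    have "{s,t} \<noteq> {u,v}" using True uS tK by (auto simp: doubleton_eq_iff)
    then show False using S_step[OF True st(1)] tK by blast
  next
    case sS: False
    show False
    proof (cases "s = u")
      case True
      then have "t \<in> {v,p,q}" using Nu st(1) by blast
      then show False using vS pK qK tK by auto
    next
      case False
      then have sK: "s \<in> K" using st(2) sS unfolding A_def by blast
      have "s \<noteq> u" using reachER_sub sK unfolding K_def by blast
      then have "{s,t} \<in> ER" unfolding ERf_def using st(1) sS tK by (auto simp: doubleton_eq_iff)
      then have "t \<in> K" using reach_step sK unfolding K_def by blast
      then show False using tK by simp
    qed
  qed
qed

lemma CE_ER: "CE ER p = ER"
proof -
  have "f \<in> CE ER p" if f: "f \<in> ER" for f
  proof -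
    obtain x y where "f = {x,y}" "x \<in> V" "x \<notin> S" "x \<noteq> u" using ER_edge[OF f] by blast
    then show ?thesis using ER_conn f unfolding CE_def by blast
  qed
  then show ?thesis using CE_sub by blast
qed

end

lemma tree_iso_refl: "tree_iso X (V,E) (V,E)"
  unfolding tree_iso_def by (simp, rule exI[of _ id]) auto

definition Rsh :: "nat set \<Rightarrow> nat set \<Rightarrow> bool" where
  "Rsh e e' \<longleftrightarrow> (\<exists>x y z. e = {x,y} \<and> e' = {y,z})"

lemma Rsh_list: "successively Rsh ({x,w} # elist (w # ws) @ [{last (w # ws), z}])"
proof (induction ws arbitrary: x w)
  case Nil
  show ?case unfolding Rsh_def by auto
next
  case (Cons w' ws)
  have "Rsh {x,w} {w,w'}" unfolding Rsh_def by blast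
  then show ?case using Cons.IH[of w w'] by simp
qed

context sprs
begin

lemma ER_edge2: "{x,y} \<in> ER \<Longrightarrow> x \<noteq> y \<and> x \<in> V \<and> y \<in> V \<and> x \<notin> S \<and> y \<notin> S \<and> x \<noteq> u \<and> y \<noteq> u"
proof -
  assume xy: "{x,y} \<in> ER"
  obtain a b where ab: "{x,y} = {a,b}" "a \<noteq> b" "a \<in> V" "b \<in> V" "a \<notin> S" "b \<notin> S" "a \<noteq> u" "b \<noteq> u"
    using ER_edge[OF xy] by blast
  have "x \<in> {a,b}" "y \<in> {a,b}" using ab(1) by auto
  moreover have "x \<noteq> y"
  proof
    assume "x = y"
    then have "a \<in> {x}" "b \<in> {x}" using ab(1) by auto
    then show False using ab(2) by simp
  qed
  ultimately show ?thesis using ab by blast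
qed

lemma u_notin_ER: "f \<in> ER \<Longrightarrow> u \<notin> f"
  using ER_edge by blast

lemma G_eq: "G {x,y} = {f \<in> E. f \<subseteq> S} \<union> (ER - {{x,y}}) \<union> {{u,x},{u,y},{u,v}}"
  unfolding Gs_def by auto

lemma nni_step:
  assumes e: "{x,y} \<in> ER" and e': "{y,z} \<in> ER" and xz: "x \<noteq> z" and phG: "phylo_tree X (V, G {x,y})"
  shows "nni X (V, G {x,y}) (V, G {y,z}) \<and> phylo_tree X (V, G {y,z})"
proof -
  have fx: "x \<noteq> y" "x \<notin> S" "y \<notin> S" "x \<noteq> u" "y \<noteq> u" "y \<in> V" using ER_edge2[OF e] by auto
  have fz: "y \<noteq> z" "z \<notin> S" "z \<noteq> u" using ER_edge2[OF e'] by auto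
  let ?A = "{f \<in> E. f \<subseteq> S}"
  have n1: "{u,x} \<notin> ?A" "{y,z} \<notin> ?A" using uS fx by auto
  have n3: "{u,x} \<notin> ER" using u_notin_ER by blast
  have n4: "{u,x} \<noteq> {u,y}" "{u,x} \<noteq> {u,v}" "{y,z} \<noteq> {u,y}" "{y,z} \<noteq> {u,v}" "{x,y} \<noteq> {y,z}"
    using fx fz xz vS basic by (auto simp: doubleton_eq_iff)
  have n5: "{y,x} = {x,y}" by (rule insert_commute)
  have in1: "{u,y} \<in> G {x,y}" "{u,x} \<in> G {x,y}" unfolding G_eq by auto
  have "{y,z} \<in> ER - {{x,y}}" using e' n4(5) by simp
  then have in2: "{y,z} \<in> G {x,y}" unfolding G_eq by blast
  have eqG: "(G {x,y} - {{u,x},{y,z}}) \<union> {{y,x},{u,z}} = G {y,z}"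
    unfolding G_eq n5
  proof (intro equalityI subsetI)
    fix f assume f: "f \<in> ({f \<in> E. f \<subseteq> S} \<union> (ER - {{x, y}}) \<union> {{u, x}, {u, y}, {u, v}} - {{u, x}, {y, z}}) \<union> {{x, y}, {u, z}}"
    show "f \<in> {f \<in> E. f \<subseteq> S} \<union> (ER - {{y, z}}) \<union> {{u, y}, {u, z}, {u, v}}"
    proof -
      consider "f \<in> {f \<in> E. f \<subseteq> S}" | "f \<in> ER - {{x, y}}" "f \<noteq> {y,z}" | "f = {u,y}" | "f = {u,v}" | "f = {x,y}" | "f = {u,z}"
        using f by blast
      then show ?thesis
      proof cases
        case 2 then show ?thesis by blast
      next
        case 5 then show ?thesis using e n4(5) by blast
      qed blast+
    qed
  next
    fix f assume f: "f \<in> {f \<in> E. f \<subseteq> S} \<union> (ER - {{y, z}}) \<union> {{u, y}, {u, z}, {u, v}}"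
    show "f \<in> ({f \<in> E. f \<subseteq> S} \<union> (ER - {{x, y}}) \<union> {{u, x}, {u, y}, {u, v}} - {{u, x}, {y, z}}) \<union> {{x, y}, {u, z}}"
    proof -
      consider "f \<in> {f \<in> E. f \<subseteq> S}" | "f \<in> ER - {{y, z}}" | "f = {u,y}" | "f = {u,z}" | "f = {u,v}"
        using f by blast
      then show ?thesis
      proof cases
        case 1 then show ?thesis using n1 by blast
      next
        case 2 then show ?thesis using n3 by blast
      next
        case 3 then show ?thesis using n4 by blast
      next
        case 4 then show ?thesis by blast
      next
        case 5 then show ?thesis using n4 by blast
      qed
    qed
  qed
  have ph2: "phylo_tree X (V, G {y,z})"
    using nni_phylo[OF phG in1(1) in1(2) fx(1) in2 fz(3)] unfolding eqG .
  have yu: "{y,u} \<in> G {x,y}" using in1(1) by (simp add: insert_commute)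
  have sub2: "{u,z} \<subseteq> {w. {y,w} \<in> G {x,y}}" using yu in2 by blast
  have "card {u,z} = 2" using fz by simp
  then have "degree (G {x,y}) y \<ge> 2" unfolding degree_def
    using card_mono[OF nbr_finite[OF phG] sub2] by simp
  then have yX: "y \<notin> X" using phylo_facts(6)[OF phG fx(6)] by simp
  have mv: "{u,y} \<in> G {x,y} \<and> u \<notin> X \<and> y \<notin> X \<and> {u,x} \<in> G {x,y} \<and> x \<noteq> y \<and> {y,z} \<in> G {x,y} \<and> z \<noteq> u \<and>
      V = V \<and> G {y,z} = (G {x,y} - {{u,x},{y,z}}) \<union> {{y,x},{u,z}}"
    by (intro conjI in1 in2 uX yX fx(1) fz(3) eqG[symmetric] refl)
  have "nni_move X (V, G {x,y}) (V, G {y,z})"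
    unfolding nni_move_def prod.case
    by (intro exI[of _ u] exI[of _ y] exI[of _ x] exI[of _ z]) (rule mv)
  then have "nni X (V, G {x,y}) (V, G {y,z})"
    unfolding nni_def using phG ph2 tree_iso_refl by blast
  then show ?thesis using ph2 by blast
qed

lemma chain:
  "successively Rsh es \<Longrightarrow> set es \<subseteq> ER \<Longrightarrow> es \<noteq> [] \<Longrightarrow> phylo_tree X (V, G (hd es)) \<Longrightarrow>
   (\<forall>e\<in>set es. phylo_tree X (V, G e)) \<and> successively (\<lambda>A B. A = B \<or> nni X A B) (map (\<lambda>e. (V, G e)) es)"
proof (induction es rule: induct_list012)
  case 1 then show ?case by simp
next
  case (2 x) then show ?case by simp
next
  case (3 e1 e2 rest)
  obtain a b c where abc: "e1 = {a,b}" "e2 = {b,c}" using 3(3) unfolding Rsh_def by auto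
  have e1: "{a,b} \<in> ER" and e2: "{b,c} \<in> ER" using 3(4) abc by auto
  have step: "phylo_tree X (V, G e2) \<and> ((V, G e1) = (V, G e2) \<or> nni X (V, G e1) (V, G e2))"
  proof (cases "a = c")
    case True
    then have "e1 = e2" using abc by (simp add: insert_commute)
    then show ?thesis using 3(6) by simp
  next
    case False
    then show ?thesis using nni_step[OF e1 e2 False] 3(6) abc by simp
  qed
  have "(\<forall>e\<in>set (e2 # rest). phylo_tree X (V, G e)) \<and>
        successively (\<lambda>A B. A = B \<or> nni X A B) (map (\<lambda>e. (V, G e)) (e2 # rest))"
    using 3(2) 3(3) 3(4) step by simp
  then show ?case using 3(6) step by auto
qed

lemma segment:
  "\<exists>Ls. Ls \<noteq> [] \<and> hd Ls = (V,E) \<and> last Ls = (V,E) \<and> (\<forall>T\<in>set Ls. phylo_tree X T) \<and>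
     successively (\<lambda>A B. A = B \<or> nni X A B) Ls \<and> length Ls \<le> 2 * card E + 4 \<and>
     (\<forall>f\<in>ER. (V, G f) \<in> set Ls)"
proof -
  obtain ws where ws: "WP ER p ws" using cover_walk[OF ER_finite ER_shape] by blast
  then obtain ws' where ws': "ws = p # ws'" unfolding WP_def by (cases ws) auto
  have lastp: "last (p # ws') = p" using ws ws' unfolding WP_def by simp
  define el where "el = {q,p} # elist (p # ws') @ [{last (p # ws'), q}]"
  have Rs: "successively Rsh el" unfolding el_def by (rule Rsh_list)
  have pqER: "{p,q} \<in> ER" unfolding ERf_def by simp
  have qp: "{q,p} = {p,q}" by (rule insert_commute)
  have setel: "set el = insert {p,q} (set (elist ws))" unfolding el_def lastp ws' qp by auto
  have elER: "set el \<subseteq> ER" using ws pqER unfolding setel WP_def by auto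
  have hdel: "hd el = {p,q}" unfolding el_def qp by simp
  have lastel: "last el = {p,q}" unfolding el_def lastp by simp
  have ch: "(\<forall>e\<in>set el. phylo_tree X (V, G e)) \<and> successively (\<lambda>A B. A = B \<or> nni X A B) (map (\<lambda>e. (V, G e)) el)"
    using chain[OF Rs elER] G_pq ph hdel unfolding el_def by simp
  define Ls where "Ls = map (\<lambda>e. (V, G e)) el"
  have cardER: "card ER \<le> card E + 1"
  proof -
    have "ER \<subseteq> insert {p,q} E" unfolding ERf_def by auto
    moreover have "finite (insert {p,q} E)" using finite_E[OF ph] by simp
    ultimately have "card ER \<le> card (insert {p,q} E)" by (simp add: card_mono)
    also have "\<dots> \<le> card E + 1" by (simp add: card_insert_le_m1)
    finally show ?thesis .
  qed
  have "length Ls = length ws + 1" unfolding Ls_def el_def ws' by (simp add: length_elist)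
  also have "\<dots> \<le> 2 * card ER + 2" using ws unfolding WP_def CE_ER by simp
  also have "\<dots> \<le> 2 * card E + 4" using cardER by simp
  finally have len: "length Ls \<le> 2 * card E + 4" .
  have "CE ER p \<subseteq> set (elist ws)" using ws unfolding WP_def by blast
  then have "ER \<subseteq> set el" unfolding CE_ER setel by blast
  then have cov: "\<forall>f\<in>ER. (V, G f) \<in> set Ls" unfolding Ls_def by auto
  show ?thesis
    apply (rule exI[of _ Ls])
    using ch len cov G_pq hdel lastel unfolding Ls_def el_def
    by (simp add: hd_map last_map)
qed

lemma ER_indep:
  assumes "{u,p'} \<in> E" "{u,q'} \<in> E" "p' \<noteq> q'" "p' \<noteq> v" "q' \<noteq> v"
  shows "ERf E u v p' q' = ER"
proof -
  have "p' \<in> {p,q}" "q' \<in> {p,q}" using assms Nu by auto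
  then have "(p' = p \<and> q' = q) \<or> (p' = q \<and> q' = p)" using assms(3) by auto
  then show ?thesis unfolding ERf_def by (auto simp: insert_commute)
qed

end

lemma Gs_alt: "Gs E u v p q {x,y} = {e \<in> E. e \<subseteq> Sf E u v} \<union> (ERf E u v p q - {{x,y}}) \<union> {{x,u},{u,y},{u,v}}"
proof -
  have "(\<lambda>w. {u,w}) ` {x,y} = {{x,u},{u,y}}" by (simp add: insert_commute)
  then show ?thesis unfolding Gs_def by blast
qed

lemma spr_move_elim:
  assumes "spr_move X (V,E) (V',E')"
  shows "\<exists>u v p q x y. {u,v} \<in> E \<and> u \<notin> X \<and> {u,p} \<in> E \<and> {u,q} \<in> E \<and> p \<noteq> q \<and> p \<noteq> v \<and> q \<noteq> v \<and>
     {x,y} \<in> ERf E u v p q \<and> V' = V \<and> E' = Gs E u v p q {x,y}"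
  using assms unfolding spr_move_def prod.case Let_def Sf_def[symmetric] ERf_def[symmetric] Gs_alt
  by blast

definition Rel :: "nat set \<Rightarrow> graph \<Rightarrow> graph \<Rightarrow> bool" where
  "Rel X A B \<longleftrightarrow> A = B \<or> nni X A B"

lemma succ_tl: "successively R (x # ys) \<Longrightarrow> successively R ys"
  by (cases ys) auto

lemma succ_hd: "successively R (x # ys) \<Longrightarrow> ys = [] \<or> R x (hd ys)"
  by (cases ys) auto

lemma succ_concat:
  assumes "\<forall>Ls\<in>set Lss. Ls \<noteq> [] \<and> hd Ls = T0 \<and> last Ls = T0 \<and> successively (Rel X) Ls"
  shows "successively (Rel X) (T0 # concat Lss)"
  using assms
proof (induction Lss)
  case Nil then show ?case by simp
next
  case (Cons Ls rest)
  have L: "Ls \<noteq> []" "hd Ls = T0" "last Ls = T0" "successively (Rel X) Ls" using Cons.prems by auto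
  have IH: "successively (Rel X) (T0 # concat rest)" using Cons by simp
  have r0: "Rel X T0 T0" unfolding Rel_def by simp
  have a: "successively (Rel X) (T0 # Ls)" using L r0 by (cases Ls) auto
  have b: "successively (Rel X) (concat rest)" using succ_tl[OF IH] .
  have c: "concat rest = [] \<or> Rel X T0 (hd (concat rest))" using succ_hd[OF IH] .
  have "successively (Rel X) ((T0 # Ls) @ concat rest)"
    unfolding successively_append_iff using a b c L by auto
  then show ?case by simp
qed

lemma length_concat_le:
  assumes "\<forall>Ls\<in>set Lss. length Ls \<le> K"
  shows "length (concat Lss) \<le> length Lss * K"
  using assms by (induction Lss) auto

lemma pair_seg:
  assumes ph: "phylo_tree X (V,E)" and uv: "{u,v} \<in> E" and uX: "u \<notin> X"
  shows "\<exists>Ls. Ls \<noteq> [] \<and> hd Ls = (V,E) \<and> last Ls = (V,E) \<and> (\<forall>T\<in>set Ls. phylo_tree X T) \<and>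
     successively (Rel X) Ls \<and> length Ls \<le> 2 * card E + 4 \<and>
     (\<forall>p' q' x y. {u,p'} \<in> E \<and> {u,q'} \<in> E \<and> p' \<noteq> q' \<and> p' \<noteq> v \<and> q' \<noteq> v \<and> {x,y} \<in> ERf E u v p' q' \<longrightarrow>
        (V, Gs E u v p' q' {x,y}) \<in> set Ls)"
proof -
  have uV: "u \<in> V" using edge_facts[OF ph uv] by simp
  let ?N = "{w. {u,w} \<in> E}"
  have d: "card ?N = 3" using phylo_facts(7)[OF ph uV uX] unfolding degree_def .
  have fin: "finite ?N" using nbr_finite[OF ph] .
  have vN: "v \<in> ?N" using uv by simp
  have "card (?N - {v}) = 2" using d fin vN by simp
  then obtain p q where pq: "?N - {v} = {p,q}" "p \<noteq> q" by (meson card_2_iff)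
  have pqN: "{u,p} \<in> E" "{u,q} \<in> E" "p \<noteq> v" "q \<noteq> v" using pq(1) by blast+
  interpret sprs X V E u v p q
    by (unfold_locales) (use ph uX uv pqN pq(2) in auto)
  obtain Ls where Ls: "Ls \<noteq> []" "hd Ls = (V,E)" "last Ls = (V,E)" "\<forall>T\<in>set Ls. phylo_tree X T"
      "successively (\<lambda>A B. A = B \<or> nni X A B) Ls" "length Ls \<le> 2 * card E + 4"
      "\<forall>f\<in>ER. (V, G f) \<in> set Ls"
    using segment by blast
  have sR: "successively (Rel X) Ls" using Ls(5) unfolding Rel_def[abs_def] .
  have cov: "(V, Gs E u v p' q' {x,y}) \<in> set Ls"
    if "{u,p'} \<in> E" "{u,q'} \<in> E" "p' \<noteq> q'" "p' \<noteq> v" "q' \<noteq> v" "{x,y} \<in> ERf E u v p' q'" for p' q' x y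
  proof -
    have eq: "ERf E u v p' q' = ER" using ER_indep that(1-5) .
    have "Gs E u v p' q' {x,y} = G {x,y}" unfolding Gs_def eq ..
    then show ?thesis using Ls(7) that(6) eq by simp
  qed
  show ?thesis using Ls sR cov by blast
qed


theorem mainTheorem2:
  "\<exists>(C::nat) (N::nat). \<forall>X T0. phylo_tree X T0 \<and> card X \<ge> N \<longrightarrow>
     (\<exists>ws. nni_walk X ws \<and> length ws - 1 \<le> C * (card X)^2 \<and>
        (\<forall>T. spr X T0 T \<longrightarrow> (\<exists>W\<in>set ws. tree_iso X W T)))"
proof (rule exI[where x="40::nat"], rule exI[where x="1::nat"], intro allI impI)
  fix X T0 assume a: "phylo_tree X T0 \<and> 1 \<le> card X"
  obtain V E where T0: "T0 = (V,E)" by (cases T0)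
  have ph: "phylo_tree X (V,E)" using a T0 by simp
  have Xne: "X \<noteq> {}" using a by auto
  define Pairs where "Pairs = {(u,v). {u,v} \<in> E \<and> u \<notin> X}"
  define SEG where "SEG P Ls \<longleftrightarrow> Ls \<noteq> [] \<and> hd Ls = (V,E) \<and> last Ls = (V,E) \<and> (\<forall>T\<in>set Ls. phylo_tree X T) \<and>
     successively (Rel X) Ls \<and> length Ls \<le> 2 * card E + 4 \<and>
     (\<forall>p' q' x y. {fst P,p'} \<in> E \<and> {fst P,q'} \<in> E \<and> p' \<noteq> q' \<and> p' \<noteq> snd P \<and> q' \<noteq> snd P \<and>
        {x,y} \<in> ERf E (fst P) (snd P) p' q' \<longrightarrow> (V, Gs E (fst P) (snd P) p' q' {x,y}) \<in> set Ls)" for P Ls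
  have "\<forall>P\<in>Pairs. \<exists>Ls. SEG P Ls"
  proof
    fix P assume "P \<in> Pairs"
    then obtain u v where P: "P = (u,v)" "{u,v} \<in> E" "u \<notin> X" unfolding Pairs_def by blast
    show "\<exists>Ls. SEG P Ls" using pair_seg[OF ph P(2) P(3)] unfolding SEG_def P(1) fst_conv snd_conv .
  qed
  then obtain seg where seg: "\<forall>P\<in>Pairs. SEG P (seg P)" by (metis bchoice)
  have PadjE: "Pairs \<subseteq> adj E" unfolding Pairs_def adj_def by auto
  have adjV: "adj E \<subseteq> V \<times> V" using edge_facts(2,3)[OF ph] unfolding adj_def by auto
  have finV: "finite V" using phylo_facts(1)[OF ph] .
  have finP: "finite Pairs" using PadjE adjV finV by (meson finite_SigmaI finite_subset)
  obtain pl where pl: "set pl = Pairs" "distinct pl" using finite_distinct_list[OF finP] by blast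
  define L where "L = (V,E) # concat (map seg pl)"
  have segs: "\<forall>Ls\<in>set (map seg pl). SEG' Ls" if "\<And>P. P \<in> Pairs \<Longrightarrow> SEG P (seg P) \<Longrightarrow> SEG' (seg P)" for SEG'
    using that seg pl(1) by auto
  have Lsucc: "successively (Rel X) L"
    unfolding L_def
    by (rule succ_concat) (rule segs, unfold SEG_def, blast)
  have Lph: "\<forall>T\<in>set L. phylo_tree X T"
  proof
    fix T assume "T \<in> set L"
    then have "T = (V,E) \<or> (\<exists>P\<in>Pairs. T \<in> set (seg P))" unfolding L_def using pl(1) by auto
    then show "phylo_tree X T" using ph seg unfolding SEG_def by blast
  qed
  have lenL: "length L \<le> 1 + card Pairs * (2 * card E + 4)"
  proof -
    have "\<forall>Ls\<in>set (map seg pl). length Ls \<le> 2 * card E + 4"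
      by (rule segs, unfold SEG_def, blast)
    then have "length (concat (map seg pl)) \<le> length (map seg pl) * (2 * card E + 4)"
      by (rule length_concat_le)
    moreover have "length (map seg pl) = card Pairs" using pl distinct_card by fastforce
    ultimately show ?thesis unfolding L_def by simp
  qed
  define n where "n = card X"
  have n1: "n \<ge> 1" using a unfolding n_def by simp
  have cV: "card V \<le> 2 * n" using V_bound[OF ph Xne] unfolding n_def .
  obtain r where r: "r \<in> V" using Xne phylo_facts(5)[OF ph] by blast
  have cE: "card E \<le> 2 * n" using tree_edges_le[OF ph r] cV by simp
  have cP: "card Pairs \<le> 4 * n"
  proof -
    have "card Pairs \<le> card (adj E)"
      using card_mono[OF finite_subset[OF adjV finite_SigmaI[OF finV finV]] PadjE] .
    then show ?thesis using adj_card_le[OF ph] cE by simp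
  qed
  have "card Pairs * (2 * card E + 4) \<le> (4 * n) * (4 * n + 4)"
    using cP cE by (intro mult_le_mono) auto
  moreover have "(4 * n) * (4 * n + 4) = 16 * (n * n) + 16 * n" by (simp add: algebra_simps)
  ultimately have l1: "length L \<le> 1 + 16 * (n * n) + 16 * n" using lenL by linarith
  have nn: "n \<le> n * n" "1 \<le> n * n" using n1 by (simp_all add: Suc_le_eq)
  have "length L \<le> 40 * (n * n)" using l1 nn by linarith
  then have lenL2: "length L \<le> 40 * n^2" by (simp add: power2_eq_square)
  define ws where "ws = remdups_adj L"
  have Lne: "L \<noteq> []" unfolding L_def by simp
  have setws: "set ws = set L" unfolding ws_def by simp
  have succws: "successively (nni X) ws"
    unfolding ws_def by (rule succ_remdups) (use Lsucc in \<open>simp add: Rel_def[abs_def]\<close>)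
  have walk: "nni_walk X ws"
    unfolding nni_walk_def using Lne setws Lph successively_nth[OF succws] unfolding ws_def by simp
  have len: "length ws - 1 \<le> 40 * (card X)^2"
    using lenL2 remdups_adj_length[of L] unfolding ws_def n_def by linarith
  have cov: "\<exists>W\<in>set ws. tree_iso X W T" if sp: "spr X T0 T" for T
  proof -
    obtain T'' where T'': "spr_move X (V,E) T''" "tree_iso X T'' T"
      using sp unfolding spr_def T0 by blast
    obtain V'' E'' where T''e: "T'' = (V'',E'')" by (cases T'')
    obtain u v p q x y where m: "{u,v} \<in> E" "u \<notin> X" "{u,p} \<in> E" "{u,q} \<in> E" "p \<noteq> q" "p \<noteq> v" "q \<noteq> v"
      "{x,y} \<in> ERf E u v p q" "V'' = V" "E'' = Gs E u v p q {x,y}"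
      using spr_move_elim[OF T''(1)[unfolded T''e]] by blast
    have P: "(u,v) \<in> Pairs" unfolding Pairs_def using m by simp
    then have "SEG (u,v) (seg (u,v))" using seg by blast
    then have "(V, Gs E u v p q {x,y}) \<in> set (seg (u,v))" unfolding SEG_def fst_conv snd_conv using m by blast
    moreover have "set (seg (u,v)) \<subseteq> set L" unfolding L_def using P pl(1) by auto
    ultimately have "T'' \<in> set ws" unfolding setws T''e m(9) m(10) by blast
    then show ?thesis using T''(2) by blast
  qed
  show "\<exists>ws. nni_walk X ws \<and> length ws - 1 \<le> 40 * (card X)^2 \<and>
        (\<forall>T. spr X T0 T \<longrightarrow> (\<exists>W\<in>set ws. tree_iso X W T))"
    using walk len cov by blast
qed

end
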